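(* For every $\gamma\in[0,1]$, the Equal Filling Till Threshold (EFTT) algorithm with threshold $\gamma$ (described in the context) is $(1-e^{-\gamma})$-CEF, i.e., on every instance the fractional matching $X$ it outputs satisfies $V_i(X)\ge (1-e^{-\gamma})\,V_i^*(y_j(X))$ for all classes $i,j$.
   Context: Online class matching (divisible setting): an instance is a bipartite graph $G=(N,M,E)$ with known agents $N$, items $M$, $E\subseteq M\times N$ ($a$ likes $o$ iff $(o,a)\in E$); agents are partitioned into $k$ known classes $N_1,\dots,N_k$. Items arrive one at a time in adversarial order; upon arrival of $o$ its set of liking agents is revealed and fractions of $o$ must be irrevocably assigned to agents liking it. A fractional matching is $X=(x_{o,a})\in[0,1]^{M\times N}$ supported on $E$ with $\sum_a x_{o,a}\le1$ for each item and $\sum_o x_{o,a}\le 1$ for each agent; the degree of an agent is $\sum_o x_{o,a}$; saturated means degree $1$. $V_i(X)=\sum_{a\in N_i}\sum_o x_{o,a}$. For class $j$, $y_j(X)\in[0,1]^M$ has $y_j(X)_o=\sum_{a\in N_j}x_{o,a}$. For $y\in[0,1]^M$, $V_i^*(y)$ is the maximum size of a fractional matching using edges of $E$ between $N_i$ and $M$ with degree at most $y_o$ at each item $o$ and at most $1$ at each agent. EFTT with threshold $\gamma$: the matching is increased continuously (water-filling). Upon arrival of item $o$: Phase I: let $Z_\gamma$ be the set of classes containing at least one agent that likes $o$ and has current degree less than $\gamma$. While $Z_\gamma\neq\emptyset$ and $o$ is not fully assigned, continuously assign mass of $o$, splitting it equally among the classes in $Z_\gamma$; within each class $i\in Z_\gamma$,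 the mass goes to the agent(s) of class $i$ liking $o$ with minimum current degree; a class is removed from $Z_\gamma$ once it no longer has an agent liking $o$ with degree less than $\gamma$. Phase II: once $Z_\gamma=\emptyset$, continuously assign the remaining mass of $o$ to the unsaturated agent(s) liking $o$ with smallest current degree, regardless of class, until $o$ is fully assigned or all agents liking $o$ are saturated. *)

theory Defs
  imports Complex_Main
begin

text \<open>Instance: agents N (type 'a), items M (type 'it), edges E \<subseteq> M \<times> N,
  class map cl assigning each agent its class (type 'c); the classes are the
  nonempty fibres of cl on N.\<close>

definition deg :: "'it set \<Rightarrow> ('it \<Rightarrow> 'a \<Rightarrow> real) \<Rightarrow> 'a \<Rightarrow> real" where
  "deg M X a = (\<Sum>it\<in>M. X it a)"

definition likers :: "'a set \<Rightarrow> ('it \<times> 'a) set \<Rightarrow> 'it \<Rightarrow> 'a set" where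
  "likers N E it = {a\<in>N. (it, a) \<in> E}"

definition Vcls :: "'a set \<Rightarrow> 'it set \<Rightarrow> ('a \<Rightarrow> 'c) \<Rightarrow> 'c \<Rightarrow> ('it \<Rightarrow> 'a \<Rightarrow> real) \<Rightarrow> real" where
  "Vcls N M cl i X = (\<Sum>a\<in>{a\<in>N. cl a = i}. \<Sum>it\<in>M. X it a)"

definition yvec :: "'a set \<Rightarrow> ('a \<Rightarrow> 'c) \<Rightarrow> 'c \<Rightarrow> ('it \<Rightarrow> 'a \<Rightarrow> real) \<Rightarrow> 'it \<Rightarrow> real" where
  "yvec N cl j X it = (\<Sum>a\<in>{a\<in>N. cl a = j}. X it a)"

definition feasible_cls :: "'a set \<Rightarrow> 'it set \<Rightarrow> ('it \<times> 'a) set \<Rightarrow> ('a \<Rightarrow> 'c) \<Rightarrow> 'c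
    \<Rightarrow> ('it \<Rightarrow> real) \<Rightarrow> ('it \<Rightarrow> 'a \<Rightarrow> real) \<Rightarrow> bool" where
  "feasible_cls N M E cl i y x \<longleftrightarrow>
     (\<forall>it a. 0 \<le> x it a) \<and>
     (\<forall>it a. x it a \<noteq> 0 \<longrightarrow> it \<in> M \<and> a \<in> N \<and> cl a = i \<and> (it, a) \<in> E) \<and>
     (\<forall>it\<in>M. (\<Sum>a\<in>{a\<in>N. cl a = i}. x it a) \<le> y it) \<and>
     (\<forall>a\<in>{a\<in>N. cl a = i}. (\<Sum>it\<in>M. x it a) \<le> 1)"

text \<open>V_i^*(y): maximum size of such a fractional matching (the set of sizes is
  nonempty, bounded and its supremum is attained).\<close>
definition Vstar :: "'a set \<Rightarrow> 'it set \<Rightarrow> ('it \<times> 'a) set \<Rightarrow> ('a \<Rightarrow> 'c) \<Rightarrow> 'c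
    \<Rightarrow> ('it \<Rightarrow> real) \<Rightarrow> real" where
  "Vstar N M E cl i y =
     Sup {(\<Sum>a\<in>{a\<in>N. cl a = i}. \<Sum>it\<in>M. x it a) | x. feasible_cls N M E cl i y x}"

text \<open>One arrival step of EFTT with threshold g: item it arrives with current
  matching X; X' is the matching after it has been processed.
  q = mass of it given in Phase I, r = mass given in Phase II.
  The continuous water-filling is described by its (unique) outcome:
  Phase I: each class c receives Q c = min (cap c) t for a common share t
   (equal splitting, classes leave Z once their agents liking it reach g),
   total min 1 (total capacity to level g); inside a class, water-filling
   (every receiving agent ends at a level \<le> g and \<le> the final level of every
   other agent of its class liking it).
  Phase II: remaining mass water-filled over all agents liking it up to level 1.\<close>
definition eftt_step :: "'a set \<Rightarrow> 'it set \<Rightarrow> ('it \<times> 'a) set \<Rightarrow> ('a \<Rightarrow> 'c) \<Rightarrow> real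
    \<Rightarrow> ('it \<Rightarrow> 'a \<Rightarrow> real) \<Rightarrow> 'it \<Rightarrow> ('it \<Rightarrow> 'a \<Rightarrow> real) \<Rightarrow> bool" where
  "eftt_step N M E cl g X it X' \<longleftrightarrow>
    (let A = likers N E it; d = deg M X;
         cap = (\<lambda>c. \<Sum>a\<in>{a\<in>A. cl a = c}. max 0 (g - d a));
         totcap = (\<Sum>a\<in>A. max 0 (g - d a))
     in \<exists>q r :: 'a \<Rightarrow> real.
        (\<forall>a. a \<notin> A \<longrightarrow> q a = 0 \<and> r a = 0) \<and>
        (\<forall>a\<in>A. 0 \<le> q a \<and> 0 \<le> r a) \<and>
        \<comment> \<open>Phase I\<close>
        (\<forall>a\<in>A. 0 < q a \<longrightarrow> d a + q a \<le> g \<and>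
                 (\<forall>b\<in>A. cl b = cl a \<longrightarrow> d a + q a \<le> d b + q b)) \<and>
        (\<forall>c. (\<Sum>a\<in>{a\<in>A. cl a = c}. q a) \<le> cap c) \<and>
        (\<forall>c\<in>cl ` A. \<forall>c'\<in>cl ` A. (\<Sum>a\<in>{a\<in>A. cl a = c}. q a) < cap c \<longrightarrow>
              (\<Sum>a\<in>{a\<in>A. cl a = c'}. q a) \<le> (\<Sum>a\<in>{a\<in>A. cl a = c}. q a)) \<and>
        (\<Sum>a\<in>A. q a) = min 1 totcap \<and>
        \<comment> \<open>Phase II\<close>
        (\<forall>a\<in>A. 0 < r a \<longrightarrow> d a + q a + r a \<le> 1 \<and>
                 (\<forall>b\<in>A. d a + q a + r a \<le> d b + q b + r b)) \<and>
        (\<Sum>a\<in>A. r a) = min (1 - min 1 totcap) (\<Sum>a\<in>A. max 0 (1 - (d a + q a))) \<and>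
        X' = (\<lambda>it' a. if it' = it then q a + r a else X it' a))"

inductive eftt_run :: "'a set \<Rightarrow> 'it set \<Rightarrow> ('it \<times> 'a) set \<Rightarrow> ('a \<Rightarrow> 'c) \<Rightarrow> real
    \<Rightarrow> 'it list \<Rightarrow> ('it \<Rightarrow> 'a \<Rightarrow> real) \<Rightarrow> bool"
  for N M E cl g where
  Nil: "eftt_run N M E cl g [] (\<lambda>it a. 0)"
| Snoc: "eftt_run N M E cl g os X \<Longrightarrow> eftt_step N M E cl g X it X'
          \<Longrightarrow> eftt_run N M E cl g (os @ [it]) X'"

end

theory Submission
  imports Defs
begin
definition cefPsi :: "real \<Rightarrow> real \<Rightarrow> real" where
  "cefPsi g t = min 1 ((exp t - 1) / (exp g - 1))"
definition cefF :: "real \<Rightarrow> real \<Rightarrow> real" where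
  "cefF g t = t - (exp t - 1 - t) / (exp g - 1)"

lemma egpos: "0 < g \<Longrightarrow> 0 < exp g - (1::real)"
  by (simp add: one_less_exp_iff)

lemma psi_mono: "0 < g \<Longrightarrow> t \<le> s \<Longrightarrow> cefPsi g t \<le> cefPsi g s"
  unfolding cefPsi_def using egpos[of g]
  by (intro min.mono) (auto intro!: divide_right_mono)

lemma psi_nonneg: "0 < g \<Longrightarrow> 0 \<le> t \<Longrightarrow> 0 \<le> cefPsi g t"
  unfolding cefPsi_def using egpos[of g] by (auto simp: one_le_exp_iff)

lemma psi_le1: "cefPsi g t \<le> 1"
  unfolding cefPsi_def by simp

lemma psi_ge: "0 < g \<Longrightarrow> g \<le> t \<Longrightarrow> cefPsi g t = 1"
  unfolding cefPsi_def using egpos[of g] by (auto simp: min_def field_simps)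

lemma psi_le: "0 < g \<Longrightarrow> t \<le> g \<Longrightarrow> cefPsi g t = (exp t - 1) / (exp g - 1)"
  unfolding cefPsi_def using egpos[of g] by (auto simp: min_def field_simps)

lemma F_inc: assumes "0 < g" "p \<le> m" "m \<le> g"
  shows "(m - p) * (1 - cefPsi g m) \<le> cefF g m - cefF g p"
proof -
  have E: "0 < exp g - 1" using egpos assms by auto
  have "1 - (m - p) \<le> exp (p - m)" using exp_ge_add_one_self[of "p - m"] by linarith
  hence "exp m * (1 - (m - p)) \<le> exp m * exp (p - m)"
    by (intro mult_left_mono) auto
  also have "exp m * exp (p - m) = exp p" by (simp add: exp_diff)
  finally have "exp m - exp p \<le> (m - p) * exp m" by (simp add: algebra_simps)
  hence "(exp m - exp p - (m - p)) / (exp g - 1) \<le> ((m - p) * (exp m - 1)) / (exp g - 1)"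
    using E by (intro divide_right_mono) (auto simp: algebra_simps)
  moreover have "(m - p) * (1 - cefPsi g m) = (m - p) - ((m - p) * (exp m - 1)) / (exp g - 1)"
    unfolding psi_le[OF assms(1,3)] by (simp add: algebra_simps)
  moreover have "cefF g m - cefF g p = (m - p) - (exp m - exp p - (m - p)) / (exp g - 1)"
    unfolding cefF_def by (simp add: diff_divide_distrib)
  ultimately show ?thesis by linarith
qed

lemma F_mono: "0 < g \<Longrightarrow> p \<le> m \<Longrightarrow> m \<le> g \<Longrightarrow> cefF g p \<le> cefF g m"
  using F_inc[of g p m] psi_le1[of g m] by (smt (verit) mult_nonneg_nonneg)

lemma final_bd: assumes "0 < g" "0 \<le> D"
  shows "cefPsi g D + cefF g (min D g) \<le> D / (1 - exp (- g))"
proof -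
  have E: "0 < exp g - 1" using egpos assms by auto
  have c: "D / (1 - exp (- g)) = D * exp g / (exp g - 1)"
    using E by (simp add: exp_minus field_simps)
  have key: "cefPsi g t + cefF g t = t * exp g / (exp g - 1)" if "t \<le> g" for t
  proof -
    have "cefPsi g t + cefF g t = t + t / (exp g - 1)"
      unfolding psi_le[OF assms(1) that] cefF_def by (simp add: diff_divide_distrib)
    also have "\<dots> = t * exp g / (exp g - 1)" using E by (simp add: field_simps)
    finally show ?thesis .
  qed
  show ?thesis
  proof (cases "D \<le> g")
    case True thus ?thesis using key[OF True] c by simp
  next
    case False
    hence "cefPsi g D = cefPsi g g" using psi_ge[OF assms(1)] by simp
    hence "cefPsi g D + cefF g (min D g) = g * exp g / (exp g - 1)" using key[of g] False by simp
    also have "\<dots> \<le> D * exp g / (exp g - 1)" using False E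
      by (intro divide_right_mono mult_right_mono) auto
    finally show ?thesis using c by simp
  qed
qed

lemma weak_dual:
  assumes fin: "finite N" "finite M" and fe: "feasible_cls N M E cl i y x"
    and al: "\<forall>a. 0 \<le> al a" and be: "\<forall>it. 0 \<le> be it"
    and cov: "\<forall>it\<in>M. \<forall>a\<in>N. cl a = i \<longrightarrow> (it, a) \<in> E \<longrightarrow> 1 \<le> al a + be it"
  shows "(\<Sum>a\<in>{a\<in>N. cl a = i}. \<Sum>it\<in>M. x it a)
     \<le> (\<Sum>a\<in>{a\<in>N. cl a = i}. al a) + (\<Sum>it\<in>M. be it * y it)"
proof -
  let ?Ni = "{a\<in>N. cl a = i}"
  have x0: "\<And>it a. 0 \<le> x it a" and xs: "\<And>it a. x it a \<noteq> 0 \<Longrightarrow> it \<in> M \<and> a \<in> N \<and> cl a = i \<and> (it, a) \<in> E"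
    and xi: "\<And>it. it \<in> M \<Longrightarrow> (\<Sum>a\<in>?Ni. x it a) \<le> y it"
    and xa: "\<And>a. a \<in> ?Ni \<Longrightarrow> (\<Sum>it\<in>M. x it a) \<le> 1"
    using fe unfolding feasible_cls_def by auto
  have "(\<Sum>a\<in>?Ni. \<Sum>it\<in>M. x it a) \<le> (\<Sum>a\<in>?Ni. \<Sum>it\<in>M. al a * x it a + be it * x it a)"
  proof (intro sum_mono)
    fix a it assume "a \<in> ?Ni" "it \<in> M"
    show "x it a \<le> al a * x it a + be it * x it a"
    proof (cases "x it a = 0")
      case True thus ?thesis by simp
    next
      case False
      hence "1 \<le> al a + be it" using xs[OF False] cov by auto
      hence "1 * x it a \<le> (al a + be it) * x it a" using x0 by (intro mult_right_mono) auto
      thus ?thesis by (simp add: algebra_simps)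
    qed
  qed
  also have "\<dots> = (\<Sum>a\<in>?Ni. al a * (\<Sum>it\<in>M. x it a)) + (\<Sum>it\<in>M. be it * (\<Sum>a\<in>?Ni. x it a))"
    by (simp add: sum.distrib sum_distrib_left sum.swap[of _ ?Ni M])
  also have "\<dots> \<le> (\<Sum>a\<in>?Ni. al a * 1) + (\<Sum>it\<in>M. be it * y it)"
    using al be xa xi by (intro add_mono sum_mono mult_left_mono) auto
  finally show ?thesis by simp
qed

lemma run_inv:
  assumes "eftt_run N M E cl g os X"
  shows "finite N \<Longrightarrow> finite M \<Longrightarrow> 0 < g \<Longrightarrow> distinct os \<Longrightarrow> set os \<subseteq> M \<Longrightarrow>
   (\<forall>it a. it \<notin> set os \<longrightarrow> X it a = 0) \<and> (\<forall>it a. 0 \<le> X it a) \<and>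
   (\<exists>be. (\<forall>it. 0 \<le> be it) \<and>
      (\<forall>it\<in>set os. \<forall>a\<in>N. cl a = i \<longrightarrow> (it, a) \<in> E \<longrightarrow> 1 \<le> cefPsi g (deg M X a) + be it) \<and>
      (\<Sum>it\<in>set os. yvec N cl j X it * be it) \<le> (\<Sum>a\<in>{a\<in>N. cl a = i}. cefF g (min (deg M X a) g)))"
  using assms
proof (induction rule: eftt_run.induct)
  case Nil
  have that: "cefF g (min (deg M (\<lambda>it a. 0) a) g) = 0" for a
    using Nil by (simp add: deg_def cefF_def)
  hence "(\<Sum>a\<in>{a\<in>N. cl a = i}. cefF g (min (deg M (\<lambda>it a. 0) a) g)) = 0"
    by (intro sum.neutral ballI) (rule that)
  thus ?case by (intro conjI exI[of _ "\<lambda>_. 0"]) auto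
next
  case (Snoc os X ob X')
  note fN = Snoc.prems(1) and fM = Snoc.prems(2) and gpos = Snoc.prems(3)
  have dos: "distinct os" and onot: "ob \<notin> set os" using Snoc.prems(4) by auto
  have osM: "set os \<subseteq> M" and oM: "ob \<in> M" using Snoc.prems(5) by auto
  from Snoc.IH[OF fN fM gpos dos osM] obtain be where
    Z: "\<forall>it a. it \<notin> set os \<longrightarrow> X it a = 0" and X0: "\<forall>it a. 0 \<le> X it a"
    and be0: "\<forall>it. 0 \<le> be it"
    and cov: "\<forall>it\<in>set os. \<forall>a\<in>N. cl a = i \<longrightarrow> (it, a) \<in> E \<longrightarrow> 1 \<le> cefPsi g (deg M X a) + be it"
    and sm: "(\<Sum>it\<in>set os. yvec N cl j X it * be it) \<le> (\<Sum>a\<in>{a\<in>N. cl a = i}. cefF g (min (deg M X a) g))"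
    by blast
  define A where "A = likers N E ob"
  define d where "d = deg M X"
  obtain q r :: "'a \<Rightarrow> real" where
    qr0: "\<forall>a. a \<notin> A \<longrightarrow> q a = 0 \<and> r a = 0"
    and qrn: "\<forall>a\<in>A. 0 \<le> q a \<and> 0 \<le> r a"
    and p1: "\<forall>a\<in>A. 0 < q a \<longrightarrow> d a + q a \<le> g \<and> (\<forall>b\<in>A. cl b = cl a \<longrightarrow> d a + q a \<le> d b + q b)"
    and p2: "\<forall>c\<in>cl ` A. \<forall>c'\<in>cl ` A. (\<Sum>a\<in>{a\<in>A. cl a = c}. q a) < (\<Sum>a\<in>{a\<in>A. cl a = c}. max 0 (g - d a)) \<longrightarrow>
              (\<Sum>a\<in>{a\<in>A. cl a = c'}. q a) \<le> (\<Sum>a\<in>{a\<in>A. cl a = c}. q a)"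
    and p3: "(\<Sum>a\<in>A. q a) = min 1 (\<Sum>a\<in>A. max 0 (g - d a))"
    and p4: "(\<Sum>a\<in>A. r a) = min (1 - min 1 (\<Sum>a\<in>A. max 0 (g - d a))) (\<Sum>a\<in>A. max 0 (1 - (d a + q a)))"
    and p5: "X' = (\<lambda>it' a. if it' = ob then q a + r a else X it' a)"
    using Snoc.hyps(2) unfolding eftt_step_def Let_def A_def d_def by blast
  have AN: "A \<subseteq> N" unfolding A_def likers_def by auto
  have fA: "finite A" using AN fN finite_subset by blast
  have qn: "0 \<le> q a" and rn: "0 \<le> r a" for a using qr0 qrn by (cases "a \<in> A"; auto)+
  have Xo: "X ob a = 0" for a using Z onot by auto
  have dX': "deg M X' a = d a + q a + r a" for a
  proof -
    have "deg M X' a = X' ob a + (\<Sum>it\<in>M - {ob}. X' it a)"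
      unfolding deg_def using sum.remove[OF fM oM] by blast
    also have "(\<Sum>it\<in>M - {ob}. X' it a) = (\<Sum>it\<in>M - {ob}. X it a)" unfolding p5 by (intro sum.cong) auto
    also have "d a = X ob a + (\<Sum>it\<in>M - {ob}. X it a)"
      unfolding d_def deg_def using sum.remove[OF fM oM] by blast
    ultimately show ?thesis using Xo[of a] p5 by simp
  qed
  have dmono: "d a \<le> deg M X' a" for a using dX' qn rn by (smt (verit))
  have yv: "yvec N cl j X' it = yvec N cl j X it" if "it \<noteq> ob" for it
    using that unfolding yvec_def p5 by simp
  have yo: "yvec N cl j X' ob = (\<Sum>a\<in>{a\<in>N. cl a = j}. q a + r a)"
    unfolding yvec_def p5 by simp
  define Bi where "Bi = {a\<in>A. cl a = i}"
  have fBi: "finite Bi" using fA unfolding Bi_def by simp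
  define m where "m = Min ((\<lambda>a. deg M X' a) ` Bi)"
  define bo where "bo = (if Bi = {} then 0 else 1 - cefPsi g m)"
  have bo0: "0 \<le> bo" unfolding bo_def using psi_le1[of g m] by auto
  have Dnn: "0 \<le> cefF g (min (deg M X' a) g) - cefF g (min (d a) g)" for a
    using F_mono[OF gpos, of "min (d a) g" "min (deg M X' a) g"] dmono[of a] by linarith
  have key: "yvec N cl j X' ob * bo \<le> (\<Sum>a\<in>{a\<in>N. cl a = i}. cefF g (min (deg M X' a) g) - cefF g (min (d a) g))"
  proof (cases "Bi = {} \<or> g \<le> m")
    case True
    hence "bo = 0" unfolding bo_def using psi_ge[OF gpos] by auto
    thus ?thesis using Dnn by (simp add: sum_nonneg)
  next
    case False
    hence Bne: "Bi \<noteq> {}" and mg: "m < g" by auto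
    have "m \<in> (\<lambda>a. deg M X' a) ` Bi"
      unfolding m_def using fBi Bne by (intro Min_in) auto
    then obtain a0 where a0: "a0 \<in> Bi" "deg M X' a0 = m" by auto
    have mle: "m \<le> deg M X' a" if "a \<in> Bi" for a
      unfolding m_def using fBi that by (intro Min_le) auto
    have qle: "q a \<le> max 0 (g - d a)" if "a \<in> A" for a
      using p1 that qn[of a] by (cases "0 < q a") auto
    have qlt: "q a0 < max 0 (g - d a0)" using a0 dX'[of a0] rn[of a0] mg by auto
    have a0A: "a0 \<in> A" and a0i: "cl a0 = i" using a0 unfolding Bi_def by auto
    have "(\<Sum>a\<in>A. q a) < (\<Sum>a\<in>A. max 0 (g - d a))"
      using sum_strict_mono_ex1[OF fA, of q "\<lambda>a. max 0 (g - d a)"] qle qlt a0A by blast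
    hence m1: "min 1 (\<Sum>a\<in>A. max 0 (g - d a)) = 1" using p3 by (auto simp: min_def split: if_splits)
    have "(\<Sum>a\<in>A. max 0 (1 - (d a + q a))) \<ge> 0" by (intro sum_nonneg) auto
    hence "(\<Sum>a\<in>A. r a) = 0" using p4 m1 by simp
    hence "\<forall>a\<in>A. r a = 0" using sum_nonneg_eq_0_iff[OF fA] rn by blast
    hence r0: "r a = 0" for a using qr0 by (cases "a \<in> A") auto
    have "(\<Sum>a\<in>Bi. q a) < (\<Sum>a\<in>Bi. max 0 (g - d a))"
      using sum_strict_mono_ex1[OF fBi, of q "\<lambda>a. max 0 (g - d a)"] qle qlt a0
      unfolding Bi_def by auto
    hence Qlt: "(\<Sum>a\<in>{a\<in>A. cl a = i}. q a) < (\<Sum>a\<in>{a\<in>A. cl a = i}. max 0 (g - d a))"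
      unfolding Bi_def .
    have QjQi: "(\<Sum>a\<in>{a\<in>A. cl a = j}. q a) \<le> (\<Sum>a\<in>{a\<in>A. cl a = i}. q a)"
    proof (cases "j \<in> cl ` A")
      case True
      have "i \<in> cl ` A" using a0A a0i by auto
      thus ?thesis using p2 True Qlt by blast
    next
      case False
      hence "{a\<in>A. cl a = j} = {}" by auto
      hence "(\<Sum>a\<in>{a\<in>A. cl a = j}. q a) = 0" by (metis sum.empty)
      moreover have "0 \<le> (\<Sum>a\<in>{a\<in>A. cl a = i}. q a)" using qn by (simp add: sum_nonneg)
      ultimately show ?thesis by simp
    qed
    have sumN: "(\<Sum>a\<in>{a\<in>N. cl a = c}. q a) = (\<Sum>a\<in>{a\<in>A. cl a = c}. q a)" for c
      using fN AN qr0 by (intro sum.mono_neutral_right) auto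
    have y'ob: "yvec N cl j X' ob = (\<Sum>a\<in>{a\<in>A. cl a = j}. q a)"
      using yo r0 sumN by simp
    have bo': "bo = 1 - cefPsi g m" unfolding bo_def using Bne by simp
    have psm: "0 \<le> 1 - cefPsi g m" using psi_le1[of g m] by simp
    have trm: "q a * (1 - cefPsi g m) \<le> cefF g (min (deg M X' a) g) - cefF g (min (d a) g)"
      if "a \<in> {a\<in>N. cl a = i}" for a
    proof (cases "0 < q a")
      case False
      hence "q a = 0" using qn[of a] by simp
      thus ?thesis using Dnn[of a] by simp
    next
      case True
      hence aA: "a \<in> A" using qr0 by auto
      hence aB: "a \<in> Bi" using that unfolding Bi_def by auto
      have "deg M X' a \<le> deg M X' a0"
        using p1 aA True a0A a0i that dX' r0 by auto
      hence da: "deg M X' a = m" using mle[OF aB] a0 by simp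
      hence "d a = m - q a" using dX'[of a] r0[of a] by simp
      thus ?thesis using F_inc[OF gpos, of "d a" m] da mg qn[of a] by (simp add: min_def)
    qed
    have "yvec N cl j X' ob * bo \<le> (\<Sum>a\<in>{a\<in>A. cl a = i}. q a) * (1 - cefPsi g m)"
      unfolding y'ob bo' using QjQi psm by (intro mult_right_mono)
    also have "\<dots> = (\<Sum>a\<in>{a\<in>N. cl a = i}. q a * (1 - cefPsi g m))"
      by (simp add: sumN[symmetric] sum_distrib_right)
    also have "\<dots> \<le> (\<Sum>a\<in>{a\<in>N. cl a = i}. cefF g (min (deg M X' a) g) - cefF g (min (d a) g))"
      using trm by (intro sum_mono)
    finally show ?thesis .
  qed
  define be' where "be' = be(ob := bo)"
  have sos: "set (os @ [ob]) = insert ob (set os)" by simp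
  have fos: "finite (set os)" by simp
  have "(\<Sum>it\<in>set (os @ [ob]). yvec N cl j X' it * be' it)
       = yvec N cl j X' ob * bo + (\<Sum>it\<in>set os. yvec N cl j X it * be it)"
  proof -
    have "(\<Sum>it\<in>set os. yvec N cl j X' it * be' it) = (\<Sum>it\<in>set os. yvec N cl j X it * be it)"
    proof (rule sum.cong)
      fix it assume "it \<in> set os"
      hence "it \<noteq> ob" using onot by auto
      thus "yvec N cl j X' it * be' it = yvec N cl j X it * be it" using yv unfolding be'_def by simp
    qed simp
    moreover have "be' ob = bo" unfolding be'_def by simp
    ultimately show ?thesis unfolding sos sum.insert[OF fos onot] by simp
  qed
  also have "\<dots> \<le> (\<Sum>a\<in>{a\<in>N. cl a = i}. cefF g (min (deg M X' a) g) - cefF g (min (d a) g))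
      + (\<Sum>a\<in>{a\<in>N. cl a = i}. cefF g (min (deg M X a) g))"
    using key sm by (rule add_mono)
  also have "\<dots> = (\<Sum>a\<in>{a\<in>N. cl a = i}. cefF g (min (deg M X' a) g))"
    unfolding d_def by (simp add: sum_subtractf)
  finally have S: "(\<Sum>it\<in>set (os @ [ob]). yvec N cl j X' it * be' it)
      \<le> (\<Sum>a\<in>{a\<in>N. cl a = i}. cefF g (min (deg M X' a) g))" .
  have C: "\<forall>it\<in>set (os @ [ob]). \<forall>a\<in>N. cl a = i \<longrightarrow> (it, a) \<in> E \<longrightarrow> 1 \<le> cefPsi g (deg M X' a) + be' it"
  proof (intro ballI impI)
    fix it a assume it: "it \<in> set (os @ [ob])" and aN: "a \<in> N" and ai: "cl a = i" and E: "(it, a) \<in> E"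
    show "1 \<le> cefPsi g (deg M X' a) + be' it"
    proof (cases "it = ob")
      case True
      have aB: "a \<in> Bi" unfolding Bi_def A_def likers_def using aN ai E True by auto
      hence "m \<le> deg M X' a" unfolding m_def using fBi by (intro Min_le) auto
      hence "cefPsi g m \<le> cefPsi g (deg M X' a)" using psi_mono[OF gpos] by blast
      thus ?thesis using True aB unfolding be'_def bo_def by auto
    next
      case False
      hence "it \<in> set os" using it by auto
      hence "1 \<le> cefPsi g (deg M X a) + be it" using cov aN ai E by blast
      moreover have "cefPsi g (deg M X a) \<le> cefPsi g (deg M X' a)"
        using psi_mono[OF gpos] dmono unfolding d_def by blast
      ultimately show ?thesis using False unfolding be'_def by simp
    qed
  qed
  have B: "\<forall>it. 0 \<le> be' it" using be0 bo0 unfolding be'_def by simp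
  have Z': "\<forall>it a. it \<notin> set (os @ [ob]) \<longrightarrow> X' it a = 0" using Z p5 by simp
  have X0': "\<forall>it a. 0 \<le> X' it a" using X0 p5 qn rn by simp
  show ?case using Z' X0' B C S by blast
qed

lemma run_nonneg:
  assumes "eftt_run N M E cl g os X"
  shows "0 \<le> X it a"
  using assms
proof (induction arbitrary: it a rule: eftt_run.induct)
  case Nil thus ?case by simp
next
  case (Snoc os X ob X')
  obtain q r :: "'a \<Rightarrow> real" where
    qr0: "\<forall>a. a \<notin> likers N E ob \<longrightarrow> q a = 0 \<and> r a = 0"
    and qrn: "\<forall>a\<in>likers N E ob. 0 \<le> q a \<and> 0 \<le> r a"
    and p5: "X' = (\<lambda>it' a. if it' = ob then q a + r a else X it' a)"
    using Snoc.hyps(2) unfolding eftt_step_def Let_def by blast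
  show ?case using Snoc.IH qr0 qrn unfolding p5
    by (cases "a \<in> likers N E ob") auto
qed

theorem lemma2:
  fixes N :: "'a set" and M :: "'o set" and E :: "('o \<times> 'a) set"
    and cl :: "'a \<Rightarrow> 'c" and g :: real and os :: "'o list"
    and X :: "'o \<Rightarrow> 'a \<Rightarrow> real"
  assumes "finite N" and "finite M" and "E \<subseteq> M \<times> N"
    and "0 \<le> g" and "g \<le> 1"
    and "distinct os" and "set os = M"
    and "eftt_run N M E cl g os X"
  shows "\<forall>i\<in>cl ` N. \<forall>j\<in>cl ` N.
           Vcls N M cl i X \<ge> (1 - exp (- g)) * Vstar N M E cl i (yvec N cl j X)"
proof (intro ballI)
  fix i j
  have X0: "0 \<le> X it a" for it a using run_nonneg[OF assms(8)] .
  have V0: "0 \<le> Vcls N M cl i X" unfolding Vcls_def using X0 by (intro sum_nonneg) auto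
  show "Vcls N M cl i X \<ge> (1 - exp (- g)) * Vstar N M E cl i (yvec N cl j X)"
  proof (cases "g = 0")
    case True thus ?thesis using V0 by simp
  next
    case False
    hence gpos: "0 < g" using assms(4) by simp
    have cpos: "0 < 1 - exp (- g)" using gpos by simp
    from run_inv[OF assms(8) assms(1,2) gpos assms(6)] assms(7) obtain be where
      be0: "\<forall>it. 0 \<le> be it"
      and cov: "\<forall>it\<in>set os. \<forall>a\<in>N. cl a = i \<longrightarrow> (it, a) \<in> E \<longrightarrow> 1 \<le> cefPsi g (deg M X a) + be it"
      and sm: "(\<Sum>it\<in>set os. yvec N cl j X it * be it) \<le> (\<Sum>a\<in>{a\<in>N. cl a = i}. cefF g (min (deg M X a) g))"
      by blast
    let ?y = "yvec N cl j X"
    let ?S = "{(\<Sum>a\<in>{a\<in>N. cl a = i}. \<Sum>it\<in>M. x it a) | x. feasible_cls N M E cl i ?y x}"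
    have deg0: "0 \<le> deg M X a" for a unfolding deg_def using X0 by (intro sum_nonneg) auto
    have y0: "0 \<le> ?y it" for it unfolding yvec_def using X0 by (intro sum_nonneg) auto
    have "feasible_cls N M E cl i ?y (\<lambda>_ _. 0)" unfolding feasible_cls_def using y0 by simp
    hence Sne: "?S \<noteq> {}" by blast
    have bound: "s \<le> Vcls N M cl i X / (1 - exp (- g))" if sS: "s \<in> ?S" for s
    proof -
      obtain x where sx: "s = (\<Sum>a\<in>{a\<in>N. cl a = i}. \<Sum>it\<in>M. x it a)" and fx: "feasible_cls N M E cl i ?y x"
        using sS by blast
      have "s \<le> (\<Sum>a\<in>{a\<in>N. cl a = i}. cefPsi g (deg M X a)) + (\<Sum>it\<in>M. be it * ?y it)"
        unfolding sx
        by (rule weak_dual[OF assms(1,2) fx]) (use psi_nonneg[OF gpos] deg0 be0 cov assms(7) in auto)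
      also have "(\<Sum>it\<in>M. be it * ?y it) = (\<Sum>it\<in>set os. ?y it * be it)"
        using assms(7) by (simp add: mult.commute)
      also have "(\<Sum>a\<in>{a\<in>N. cl a = i}. cefPsi g (deg M X a)) + (\<Sum>it\<in>set os. ?y it * be it)
          \<le> (\<Sum>a\<in>{a\<in>N. cl a = i}. cefPsi g (deg M X a) + cefF g (min (deg M X a) g))"
        using sm by (simp add: sum.distrib)
      also have "\<dots> \<le> (\<Sum>a\<in>{a\<in>N. cl a = i}. deg M X a / (1 - exp (- g)))"
        using final_bd[OF gpos deg0] by (intro sum_mono) auto
      also have "\<dots> = Vcls N M cl i X / (1 - exp (- g))"
        unfolding Vcls_def deg_def by (simp add: sum_divide_distrib)
      finally show ?thesis .
    qed
    have "Vstar N M E cl i ?y \<le> Vcls N M cl i X / (1 - exp (- g))"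
      unfolding Vstar_def using Sne bound by (intro cSup_least) auto
    hence "(1 - exp (- g)) * Vstar N M E cl i ?y \<le> (1 - exp (- g)) * (Vcls N M cl i X / (1 - exp (- g)))"
      using cpos by (intro mult_left_mono) auto
    thus ?thesis using cpos by simp
  qed
qed
end
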